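(* Let $T_1$ be a quadtree in $\mathbb{R}^d$ with extended quadtree $T^*$, and let $\{C_i\in T^*\mid i\in[a,b]\}$ be a chain of length $k=b-a$. Then for every index $j$ with $j,j+1\in[a,b]$, the cells $C_j$ and $C_{j+1}$ are not family related.
   Context: A quadtree on an axis-aligned root hypercube $R\subset\mathbb{R}^d$ is a hierarchical decomposition in which every node has an associated axis-aligned hypercube (cell) and is either a leaf or has $2^d$ equal-sized children whose cells subdivide its cell. The size $|C|$ of a cell is its edge length. Two cells are neighbors if they are interior-disjoint and share (part of) a $(d-1)$-dimensional facet. Two cells $C_1,C_2$ with $|C_1|\le|C_2|$ are family related if the parent of $C_2$ is an ancestor of $C_1$. For an integer $j$, a cell $C$ is $2^j$-smooth if every leaf neighboring $C$ has size at most $2^j|C|$. Extended quadtree: the cells of $T_1$ get brand $1$. Recursively, for $j\ge1$, let $T^j$ be the quadtree formed by $\bigcup_{i\le j}T_i$, and let $T_{j+1}$ be the minimal set of cells obtained by splitting cells of $T^j$ such that every cell of $T_j$ is $2^j$-smooth in the resulting quadtree; the cells of $T_{j+1}$ get brand $j+1$. The extended quadtree is $T^*=T^{d+1}$. A chain of length $k=b-a$ in $T^*$ is an ordered set $\{C_i\in T^*\mid i\in[a,b]\}$ such that each $C_j$ has brand $j$ and, for each $j\in[a,b-1]$, $C_j$ neighbors $C_{j+1}$ and $|C_{j+1}|=2^j|C_j|$. *)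

theory Defs
  imports "HOL-Analysis.Analysis"
begin

text \<open>A cell (axis-aligned hypercube in R^d, d = CARD('n)) is represented by its
  lower corner and its edge length.\<close>
type_synonym 'n cell = "(real^'n) \<times> real"

definition cell_set :: "'n::finite cell \<Rightarrow> (real^'n) set" where
  "cell_set C = cbox (fst C) (fst C + snd C *\<^sub>R One)"

definition cell_size :: "'n::finite cell \<Rightarrow> real" where
  "cell_size C = snd C"

definition children :: "'n::finite cell \<Rightarrow> 'n cell set" where
  "children C = {(fst C + (snd C / 2) *\<^sub>R v, snd C / 2) | v. \<forall>i. v $ i \<in> {0, 1}}"

definition quadtree :: "'n::finite cell \<Rightarrow> 'n cell set \<Rightarrow> bool" where
  "quadtree R T \<longleftrightarrow> 0 < snd R \<and> finite T \<and> R \<in> T \<and>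
     (\<forall>X\<in>T. X = R \<or> (\<exists>P\<in>T. X \<in> children P)) \<and>
     (\<forall>P\<in>T. children P \<inter> T = {} \<or> children P \<subseteq> T)"

definition leaf :: "'n::finite cell set \<Rightarrow> 'n cell \<Rightarrow> bool" where
  "leaf T C \<longleftrightarrow> C \<in> T \<and> children C \<inter> T = {}"

definition neighbors :: "'n::finite cell \<Rightarrow> 'n cell \<Rightarrow> bool" where
  "neighbors C1 C2 \<longleftrightarrow> interior (cell_set C1) \<inter> interior (cell_set C2) = {} \<and>
     (\<exists>F G. F facet_of cell_set C1 \<and> G facet_of cell_set C2 \<and>
            aff_dim (F \<inter> G) = int CARD('n) - 1)"

definition smooth :: "'n::finite cell set \<Rightarrow> nat \<Rightarrow> 'n cell \<Rightarrow> bool" where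
  "smooth T j C \<longleftrightarrow> (\<forall>L. leaf T L \<and> neighbors L C \<longrightarrow> cell_size L \<le> 2 ^ j * cell_size C)"

definition ancestor :: "'n::finite cell set \<Rightarrow> 'n cell \<Rightarrow> 'n cell \<Rightarrow> bool" where
  "ancestor T P C \<longleftrightarrow> (P, C) \<in> {(X, Y). X \<in> T \<and> Y \<in> children X}\<^sup>*"

definition fam_rel_ord :: "'n::finite cell set \<Rightarrow> 'n cell \<Rightarrow> 'n cell \<Rightarrow> bool" where
  "fam_rel_ord T C1 C2 \<longleftrightarrow> (\<exists>P\<in>T. C2 \<in> children P \<and> ancestor T P C1)"

definition family_related :: "'n::finite cell set \<Rightarrow> 'n cell \<Rightarrow> 'n cell \<Rightarrow> bool" where
  "family_related T C1 C2 \<longleftrightarrow>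
     (if cell_size C1 \<le> cell_size C2 then fam_rel_ord T C1 C2 else fam_rel_ord T C2 C1)"

text \<open>Stages of the extended quadtree: ext_stage R T1 n = (T^(n+1), T_(n+1)).\<close>
fun ext_stage :: "'n::finite cell \<Rightarrow> 'n cell set \<Rightarrow> nat \<Rightarrow> 'n cell set \<times> 'n cell set" where
  "ext_stage R T1 0 = (T1, T1)"
| "ext_stage R T1 (Suc n) =
     (let U = fst (ext_stage R T1 n); N = snd (ext_stage R T1 n);
          U' = (LEAST Q. quadtree R Q \<and> U \<subseteq> Q \<and> (\<forall>C\<in>N. smooth Q (Suc n) C))
      in (U', U' - U))"

text \<open>T^j and T_j (cells of brand j), for j \<ge> 1.\<close>
definition Tup :: "'n::finite cell \<Rightarrow> 'n cell set \<Rightarrow> nat \<Rightarrow> 'n cell set" where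
  "Tup R T1 j = fst (ext_stage R T1 (j - 1))"

definition brand_cells :: "'n::finite cell \<Rightarrow> 'n cell set \<Rightarrow> nat \<Rightarrow> 'n cell set" where
  "brand_cells R T1 j = snd (ext_stage R T1 (j - 1))"

definition ext_quadtree :: "'n::finite cell \<Rightarrow> 'n cell set \<Rightarrow> 'n cell set" where
  "ext_quadtree R T1 = Tup R T1 (CARD('n) + 1)"

definition has_brand :: "'n::finite cell \<Rightarrow> 'n cell set \<Rightarrow> 'n cell \<Rightarrow> nat \<Rightarrow> bool" where
  "has_brand R T1 C j \<longleftrightarrow> 1 \<le> j \<and> j \<le> CARD('n) + 1 \<and> C \<in> ext_quadtree R T1 \<and>
     C \<in> brand_cells R T1 j"

definition is_chain :: "'n::finite cell \<Rightarrow> 'n cell set \<Rightarrow> (nat \<Rightarrow> 'n cell) \<Rightarrow> nat \<Rightarrow> nat \<Rightarrow> bool" where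
  "is_chain R T1 C a b \<longleftrightarrow> a \<le> b \<and>
     (\<forall>i. a \<le> i \<and> i \<le> b \<longrightarrow> has_brand R T1 (C i) i) \<and>
     (\<forall>j. a \<le> j \<and> j < b \<longrightarrow> neighbors (C j) (C (Suc j)) \<and>
          cell_size (C (Suc j)) = 2 ^ j * cell_size (C j))"

end

theory Submission
  imports Defs
begin

lemma one_nth[simp]: "(One::real^'n) $ i = 1" by (metis Cart_1 one_index)



lemma cell_small: assumes "snd X \<le> 0" shows "cell_set X \<subseteq> {fst X}"
proof
  fix x assume "x \<in> cell_set X"
  hence h: "\<And>i. fst X $ i \<le> x $ i \<and> x $ i \<le> fst X $ i + snd X"
    unfolding cell_set_def mem_box_cart vector_add_component vector_scaleR_component one_nth
    by simp
  have "x = fst X" unfolding vec_eq_iff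
  proof
    fix i show "x $ i = fst X $ i" using h[of i] assms by linarith
  qed
  thus "x \<in> {fst X}" by simp
qed

lemma facet_pos: assumes "F facet_of cell_set X" shows "snd X > 0"
proof (rule ccontr)
  assume "\<not> snd X > 0"
  hence s: "cell_set X \<subseteq> {fst X}" by (intro cell_small) simp
  have F: "F \<noteq> {}" "F \<subseteq> cell_set X" "aff_dim F = aff_dim (cell_set X) - 1"
    using assms face_of_imp_subset unfolding facet_of_def by blast+
  have "F = cell_set X" using s F(1,2) by blast
  thus False using F by simp
qed

lemma neighbors_pos: "neighbors X Y \<Longrightarrow> snd X > 0 \<and> snd Y > 0"
  unfolding neighbors_def using facet_pos by blast



fun lev :: "'n::finite cell \<Rightarrow> nat \<Rightarrow> 'n cell set" where
  "lev R 0 = {R}"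
| "lev R (Suc k) = \<Union>(children ` lev R k)"

definition grid :: "'n::finite cell \<Rightarrow> nat \<Rightarrow> 'n cell \<Rightarrow> bool" where
  "grid R k X \<longleftrightarrow> (\<exists>v. (\<forall>i. v $ i \<in> \<int>) \<and> X = (fst R + (snd R / 2^k) *\<^sub>R v, snd R / 2^k))"

lemma children_iff: "X \<in> children P \<longleftrightarrow> (\<exists>w. (\<forall>i. w $ i \<in> {0,1}) \<and> X = (fst P + (snd P / 2) *\<^sub>R w, snd P / 2))"
  unfolding children_def by blast

lemma lev_grid: "X \<in> lev R k \<Longrightarrow> grid R k X"
proof (induction k arbitrary: X)
  case 0 thus ?case unfolding grid_def by (auto intro: exI[of _ 0])
next
  case (Suc k)
  then obtain P where P: "P \<in> lev R k" "X \<in> children P" by auto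
  obtain u where u: "\<forall>i. u $ i \<in> \<int>" "P = (fst R + (snd R / 2^k) *\<^sub>R u, snd R / 2^k)"
    using Suc.IH[OF P(1)] unfolding grid_def by blast
  obtain w where w: "\<forall>i. w $ i \<in> {0,1}" "X = (fst P + (snd P / 2) *\<^sub>R w, snd P / 2)"
    using P(2) unfolding children_iff by blast
  let ?v = "2 *\<^sub>R u + w"
  have vi: "\<forall>i. ?v $ i \<in> \<int>"
  proof
    fix i
    have "w $ i \<in> \<int>" using w(1) by (metis Ints_0 Ints_1 insert_iff singletonD)
    thus "?v $ i \<in> \<int>" using u(1) by (simp add: Ints_add Ints_mult)
  qed
  have "X = (fst R + (snd R / 2^Suc k) *\<^sub>R ?v, snd R / 2^Suc k)"
    unfolding w(2) u(2) by (simp add: vec_eq_iff algebra_simps)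
  thus ?case unfolding grid_def using vi by blast
qed

lemma lev_size: "X \<in> lev R k \<Longrightarrow> snd X = snd R / 2^k"
  using lev_grid unfolding grid_def by fastforce

lemma finite_vecs: "finite {v::real^'n::finite. \<forall>i. v $ i \<in> A}" if "finite A"
proof -
  have "{v::real^'n. \<forall>i. v $ i \<in> A} \<subseteq> vec_lambda ` (PiE UNIV (\<lambda>_. A))"
  proof
    fix v :: "real^'n" assume "v \<in> {v. \<forall>i. v $ i \<in> A}"
    hence "vec_nth v \<in> PiE UNIV (\<lambda>_. A)" by auto
    thus "v \<in> vec_lambda ` (PiE UNIV (\<lambda>_. A))" by (metis image_eqI vec_nth_inverse)
  qed
  moreover have "finite (PiE (UNIV::'n set) (\<lambda>_. A))" using that by (simp add: finite_PiE)
  ultimately show ?thesis by (meson finite_imageI finite_subset)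
qed

lemma finite_children: "finite (children (P::'n::finite cell))"
proof -
  have "children P = (\<lambda>w. (fst P + (snd P / 2) *\<^sub>R w, snd P / 2)) ` {w. \<forall>i. w $ i \<in> {0,1}}"
    unfolding children_def by blast
  moreover have "finite {w::real^'n. \<forall>i. w $ i \<in> {0,1}}" by (rule finite_vecs) simp
  ultimately show ?thesis by simp
qed

lemma children_ne: "(fst P, snd P / 2) \<in> children P"
  unfolding children_iff by (rule exI[of _ 0]) simp

lemma finite_lev: "finite (lev R k)"
  by (induction k) (auto simp: finite_children)

lemma int_small: "(z::real) \<in> \<int> \<Longrightarrow> \<bar>z\<bar> < 1 \<Longrightarrow> z = 0"
proof -
  assume "z \<in> \<int>" "\<bar>z\<bar> < 1"
  then obtain n where n: "z = of_int n" by (auto elim: Ints_cases)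
  hence "\<bar>n\<bar> < 1" using \<open>\<bar>z\<bar> < 1\<close> by linarith
  thus "z = 0" using n by simp
qed

lemma parent_unique:
  assumes R: "snd R > 0" and P1: "P1 \<in> lev R k1" and P2: "P2 \<in> lev R k2"
    and X1: "X \<in> children P1" and X2: "X \<in> children P2"
  shows "P1 = P2"
proof -
  obtain u1 where u1: "\<forall>i. u1 $ i \<in> \<int>" "P1 = (fst R + (snd R / 2^k1) *\<^sub>R u1, snd R / 2^k1)"
    using lev_grid[OF P1] unfolding grid_def by blast
  obtain u2 where u2: "\<forall>i. u2 $ i \<in> \<int>" "P2 = (fst R + (snd R / 2^k2) *\<^sub>R u2, snd R / 2^k2)"
    using lev_grid[OF P2] unfolding grid_def by blast
  obtain w1 where w1: "\<forall>i. w1 $ i \<in> {0,1}" "X = (fst P1 + (snd P1 / 2) *\<^sub>R w1, snd P1 / 2)"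
    using X1 unfolding children_iff by blast
  obtain w2 where w2: "\<forall>i. w2 $ i \<in> {0,1}" "X = (fst P2 + (snd P2 / 2) *\<^sub>R w2, snd P2 / 2)"
    using X2 unfolding children_iff by blast
  define h where "h = snd R / 2^k1"
  have hpos: "h > 0" unfolding h_def using R by simp
  have hh: "snd R / 2^k2 = h" using w1(2) w2(2) u1(2) u2(2) unfolding h_def by auto
  have "u1 $ i = u2 $ i" for i
  proof -
    have "fst X $ i = fst X $ i" by simp
    hence "h * u1 $ i + (h/2) * w1 $ i = h * u2 $ i + (h/2) * w2 $ i"
      using w1(2) w2(2) u1(2) u2(2) hh unfolding h_def
      by (simp add: vec_eq_iff)
    hence e: "2 * (u1 $ i - u2 $ i) = w2 $ i - w1 $ i" using hpos
      by (simp add: field_simps) (smt (verit, ccfv_SIG) mult_left_cancel distrib_left)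
    have "\<bar>u1 $ i - u2 $ i\<bar> < 1" using e w1(1) w2(1) by (smt (verit) insertE singletonD)
    moreover have "u1 $ i - u2 $ i \<in> \<int>" using u1(1) u2(1) by (simp add: Ints_diff)
    ultimately show ?thesis using int_small by force
  qed
  hence "u1 = u2" by (simp add: vec_eq_iff)
  thus ?thesis using u1(2) u2(2) hh unfolding h_def by simp
qed



lemma children_snd: "X \<in> children P \<Longrightarrow> snd X = snd P / 2"
  unfolding children_iff by auto

lemma children_zero: "snd P = 0 \<Longrightarrow> children P = {P}"
  unfolding children_def by (auto simp: prod_eq_iff intro: exI[of _ 0])

lemma lev_pos: "snd R > 0 \<Longrightarrow> X \<in> lev R k \<Longrightarrow> snd X > 0 \<and> snd X \<le> snd R"
proof -
  assume "snd R > 0" "X \<in> lev R k"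
  hence "snd X = snd R / 2^k" by (simp add: lev_size)
  moreover have "snd R / 2^k \<le> snd R" using \<open>snd R > 0\<close>
    by (simp add: divide_le_eq)
  ultimately show ?thesis using \<open>snd R > 0\<close> by simp
qed

lemma qt_nonneg:
  assumes q: "quadtree R T" and X: "X \<in> T" shows "snd X \<ge> 0"
proof -
  have fin: "finite T" and R: "R \<in> T" "snd R > 0"
    and par: "\<forall>X\<in>T. X = R \<or> (\<exists>P\<in>T. X \<in> children P)"
    using q unfolding quadtree_def by auto
  define M where "M = Min (snd ` T)"
  have "M \<in> snd ` T" unfolding M_def using fin R by (intro Min_in) auto
  then obtain X0 where X0: "X0 \<in> T" "snd X0 = M" by auto
  have Mle: "\<And>Y. Y \<in> T \<Longrightarrow> M \<le> snd Y" unfolding M_def using fin by simp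
  have "M \<ge> 0"
  proof (rule ccontr)
    assume "\<not> M \<ge> 0"
    hence "X0 \<noteq> R" using X0 R by auto
    then obtain P where "P \<in> T" "X0 \<in> children P" using par X0 by auto
    hence "snd P = 2 * M" using children_snd X0 by fastforce
    thus False using Mle[OF \<open>P \<in> T\<close>] \<open>\<not> M \<ge> 0\<close> by simp
  qed
  thus ?thesis using Mle[OF X] by simp
qed

lemma qt_lev:
  assumes q: "quadtree R T" and X: "X \<in> T" and pos: "snd X > 0"
  shows "\<exists>k. X \<in> lev R k"
proof (rule ccontr)
  assume nX: "\<not> (\<exists>k. X \<in> lev R k)"
  have fin: "finite T" and R: "R \<in> T" "snd R > 0"
    and par: "\<forall>X\<in>T. X = R \<or> (\<exists>P\<in>T. X \<in> children P)"
    using q unfolding quadtree_def by auto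
  define S where "S = {X\<in>T. snd X > 0 \<and> (\<forall>k. X \<notin> lev R k)}"
  have finS: "finite S" unfolding S_def using fin by simp
  have "X \<in> S" unfolding S_def using X pos nX by auto
  define M where "M = Max (snd ` S)"
  have "M \<in> snd ` S" unfolding M_def using finS \<open>X \<in> S\<close> by (intro Max_in) auto
  then obtain X0 where X0: "X0 \<in> S" "snd X0 = M" by auto
  have Mge: "\<And>Y. Y \<in> S \<Longrightarrow> snd Y \<le> M" unfolding M_def using finS by simp
  have "R \<in> lev R 0" by simp
  hence "X0 \<noteq> R" using X0 unfolding S_def by blast
  then obtain P where P: "P \<in> T" "X0 \<in> children P" using par X0 unfolding S_def by auto
  hence sP: "snd P = 2 * M" using children_snd X0 by fastforce
  have M0: "M > 0" using X0 unfolding S_def by auto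
  show False
  proof (cases "P \<in> S")
    case True thus False using Mge[OF True] sP M0 by simp
  next
    case False
    then obtain k where "P \<in> lev R k" using P(1) sP M0 unfolding S_def by auto
    hence "X0 \<in> lev R (Suc k)" using P(2) by auto
    thus False using X0(1) unfolding S_def by blast
  qed
qed

lemma exists_K:
  fixes N :: "'n::finite cell set" and R :: "'n cell"
  assumes "finite N" "snd R > 0"
  shows "\<exists>K. \<forall>C\<in>N. snd C > 0 \<longrightarrow> snd R / 2^K \<le> snd C"
  using assms(1)
proof (induction N rule: finite_induct)
  case empty thus ?case by simp
next
  case (insert C N)
  then obtain K where K: "\<forall>C\<in>N. snd C > 0 \<longrightarrow> snd R / 2^K \<le> snd C" by blast
  obtain K2 where K2: "snd C > 0 \<longrightarrow> snd R / 2^K2 \<le> snd C"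
  proof (cases "snd C > 0")
    case True
    then obtain n where "(1/2::real)^n < snd C / snd R"
      using real_arch_pow_inv[of "snd C / snd R" "1/2"] assms(2) by auto
    hence "snd R / 2^n \<le> snd C" using assms(2)
      by (simp add: power_divide field_simps)
    thus ?thesis using that by blast
  next
    case False thus ?thesis using that by blast
  qed
  have mono: "snd R / 2^(max K K2) \<le> snd R / 2^m" if "m \<le> max K K2" for m
    using assms(2) that by (simp add: frac_le power_increasing)
  have "\<forall>D\<in>insert C N. snd D > 0 \<longrightarrow> snd R / 2^(max K K2) \<le> snd D"
  proof (intro ballI impI)
    fix D assume D: "D \<in> insert C N" "snd D > 0"
    show "snd R / 2^(max K K2) \<le> snd D"
    proof (cases "D = C")
      case True
      thus ?thesis using K2 D(2) mono[of K2] by simp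
    next
      case False
      hence "D \<in> N" using D(1) by simp
      thus ?thesis using K D(2) mono[of K] by fastforce
    qed
  qed
  thus ?case by blast
qed



definition valid :: "'n::finite cell \<Rightarrow> 'n cell set \<Rightarrow> 'n cell set \<Rightarrow> nat \<Rightarrow> 'n cell set \<Rightarrow> bool" where
  "valid R U N k Q \<longleftrightarrow> quadtree R Q \<and> U \<subseteq> Q \<and> (\<forall>C\<in>N. smooth Q k C)"

lemma valid_exists:
  assumes q: "quadtree R U" and N: "N \<subseteq> U"
  shows "\<exists>Q. valid R U N k Q"
proof -
  have finU: "finite U" and R: "R \<in> U" "snd R > 0"
    and parU: "\<forall>X\<in>U. X = R \<or> (\<exists>P\<in>U. X \<in> children P)"
    and chU: "\<forall>P\<in>U. children P \<inter> U = {} \<or> children P \<subseteq> U"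
    using q unfolding quadtree_def by auto
  obtain K where K: "\<forall>C\<in>N. snd C > 0 \<longrightarrow> snd R / 2^K \<le> snd C"
    using exists_K[of N R] finU N R(2) finite_subset by blast
  define Q where "Q = U \<union> (\<Union>k\<in>{..K}. lev R k)"
  have inlev: "\<exists>k. P \<in> lev R k" if "P \<in> Q" "snd P > 0" for P
    using that qt_lev[OF q] unfolding Q_def by blast
  have childQ: "children P \<subseteq> Q" if P: "P \<in> Q" and Y: "Y \<in> children P" "Y \<in> Q" for P Y
  proof (cases "snd P = 0")
    case True thus ?thesis using children_zero[OF True] P by simp
  next
    case False
    have "snd P \<ge> 0" using P qt_nonneg[OF q] lev_pos[OF R(2)] unfolding Q_def by fastforce
    hence Ppos: "snd P > 0" using False by simp
    then obtain kp where kp: "P \<in> lev R kp" using inlev P by blast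
    have sY: "snd Y = snd P / 2" using children_snd Y(1) .
    have "snd P \<le> snd R" using lev_pos[OF R(2) kp] by simp
    hence YR: "Y \<noteq> R" using sY R(2) by auto
    show ?thesis
    proof (cases "Y \<in> U")
      case True
      then obtain P' where P': "P' \<in> U" "Y \<in> children P'" using parU YR by auto
      have "snd P' > 0" using children_snd[OF P'(2)] sY Ppos by simp
      then obtain k' where "P' \<in> lev R k'" using qt_lev[OF q P'(1)] by blast
      hence "P = P'" using parent_unique[OF R(2) kp _ Y(1) P'(2)] by blast
      thus ?thesis using chU P' True unfolding Q_def by blast
    next
      case False
      then obtain ky where ky: "ky \<le> K" "Y \<in> lev R ky" using Y(2) unfolding Q_def by blast
      have "ky \<noteq> 0" using ky YR by (metis lev.simps(1) singletonD)
      then obtain k' where k': "ky = Suc k'" using not0_implies_Suc by blast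
      then obtain P'' where P'': "P'' \<in> lev R k'" "Y \<in> children P''" using ky(2) by auto
      hence "P = P''" using parent_unique[OF R(2) kp _ Y(1)] by blast
      hence "children P \<subseteq> lev R ky" using P'' k' by auto
      thus ?thesis using ky(1) unfolding Q_def by blast
    qed
  qed
  have qQ: "quadtree R Q"
    unfolding quadtree_def
  proof (intro conjI ballI)
    show "0 < snd R" using R by simp
    show "finite Q" unfolding Q_def using finU by (simp add: finite_lev)
    show "R \<in> Q" unfolding Q_def using R by simp
  next
    fix X assume X: "X \<in> Q"
    show "X = R \<or> (\<exists>P\<in>Q. X \<in> children P)"
    proof (cases "X \<in> U")
      case True thus ?thesis using parU unfolding Q_def by blast
    next
      case False
      then obtain k where k: "k \<le> K" "X \<in> lev R k" using X unfolding Q_def by blast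
      show ?thesis
      proof (cases k)
        case 0 thus ?thesis using k by simp
      next
        case (Suc k')
        then obtain P where "P \<in> lev R k'" "X \<in> children P" using k by auto
        moreover have "k' \<le> K" using Suc k by simp
        ultimately show ?thesis unfolding Q_def by blast
      qed
    qed
  next
    fix P assume "P \<in> Q"
    thus "children P \<inter> Q = {} \<or> children P \<subseteq> Q" using childQ by blast
  qed
  have "\<forall>C\<in>N. smooth Q k C"
    unfolding smooth_def
  proof (intro ballI allI impI)
    fix C L assume C: "C \<in> N" and L: "leaf Q L \<and> neighbors L C"
    have pos: "snd L > 0" "snd C > 0" using neighbors_pos[of L C] L by auto
    have LQ: "L \<in> Q" and lf: "children L \<inter> Q = {}" using L unfolding leaf_def by auto
    obtain kl where kl: "L \<in> lev R kl" using inlev[OF LQ pos(1)] by blast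
    have "\<not> kl < K"
    proof
      assume "kl < K"
      hence "Suc kl \<in> {..K}" by simp
      moreover have "children L \<subseteq> lev R (Suc kl)" using kl by auto
      ultimately have "children L \<subseteq> Q" unfolding Q_def by blast
      thus False using lf children_ne[of L] by blast
    qed
    hence "snd L \<le> snd R / 2^K" using lev_size[OF kl] R(2)
      by (simp add: frac_le power_increasing)
    also have "\<dots> \<le> snd C" using K C pos by simp
    also have "\<dots> \<le> 2^k * snd C" using pos by simp
    finally show "cell_size L \<le> 2 ^ k * cell_size C" unfolding cell_size_def .
  qed
  moreover have "U \<subseteq> Q" unfolding Q_def by simp
  ultimately show ?thesis unfolding valid_def using qQ by blast
qed



lemma valid_inter:
  assumes q: "quadtree R U" and N: "N \<subseteq> U"
  shows "valid R U N k (\<Inter>{Q. valid R U N k Q})"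
proof -
  define V where "V = {Q. valid R U N k Q}"
  obtain Q0 where Q0: "valid R U N k Q0" using valid_exists[OF q N] by blast
  have Q0V: "Q0 \<in> V" using Q0 unfolding V_def by simp
  have qV: "\<And>Q. Q \<in> V \<Longrightarrow> quadtree R Q" and UV: "\<And>Q. Q \<in> V \<Longrightarrow> U \<subseteq> Q"
    and sV: "\<And>Q C. Q \<in> V \<Longrightarrow> C \<in> N \<Longrightarrow> smooth Q k C"
    unfolding V_def valid_def by auto
  define Qm where "Qm = \<Inter>V"
  have sub0: "Qm \<subseteq> Q0" unfolding Qm_def using Q0V by blast
  have R: "R \<in> U" "snd R > 0" using q unfolding quadtree_def by auto
  have qm: "quadtree R Qm"
    unfolding quadtree_def
  proof (intro conjI ballI)
    show "0 < snd R" using R by simp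
    show "finite Qm" using sub0 qV[OF Q0V] unfolding quadtree_def by (meson finite_subset)
    show "R \<in> Qm" unfolding Qm_def using UV R by blast
  next
    fix X assume X: "X \<in> Qm"
    show "X = R \<or> (\<exists>P\<in>Qm. X \<in> children P)"
    proof (cases "X = R")
      case True thus ?thesis by simp
    next
      case XR: False
      have X0: "X \<in> Q0" using X sub0 by blast
      have "snd X \<ge> 0" using qt_nonneg[OF qV[OF Q0V] X0] .
      show ?thesis
      proof (cases "snd X = 0")
        case True thus ?thesis using X children_zero[OF True] by blast
      next
        case False
        hence Xpos: "snd X > 0" using \<open>snd X \<ge> 0\<close> by simp
        have par: "\<exists>P\<in>Q. X \<in> children P" if "Q \<in> V" for Q
          using qV[OF that] X XR that unfolding quadtree_def Qm_def by blast
        obtain P0 where P0: "P0 \<in> Q0" "X \<in> children P0" using par[OF Q0V] by blast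
        have "snd P0 > 0" using children_snd[OF P0(2)] Xpos by simp
        then obtain k0 where k0: "P0 \<in> lev R k0" using qt_lev[OF qV[OF Q0V] P0(1)] by blast
        have "P0 \<in> Q" if QV: "Q \<in> V" for Q
        proof -
          obtain P where P: "P \<in> Q" "X \<in> children P" using par[OF QV] by blast
          have "snd P > 0" using children_snd[OF P(2)] Xpos by simp
          then obtain kq where "P \<in> lev R kq" using qt_lev[OF qV[OF QV] P(1)] by blast
          hence "P = P0" using parent_unique[OF R(2) _ k0 P(2) P0(2)] by blast
          thus ?thesis using P by simp
        qed
        hence "P0 \<in> Qm" unfolding Qm_def by blast
        thus ?thesis using P0 by blast
      qed
    qed
  next
    fix P assume P: "P \<in> Qm"
    show "children P \<inter> Qm = {} \<or> children P \<subseteq> Qm"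
    proof (cases "children P \<inter> Qm = {}")
      case False
      then obtain Y where Y: "Y \<in> children P" "Y \<in> Qm" by blast
      have "children P \<subseteq> Q" if QV: "Q \<in> V" for Q
      proof -
        have "P \<in> Q" "Y \<in> Q" using P Y QV unfolding Qm_def by auto
        thus ?thesis using qV[OF QV] Y(1) unfolding quadtree_def by blast
      qed
      thus ?thesis unfolding Qm_def by blast
    qed simp
  qed
  have "\<forall>C\<in>N. smooth Qm k C"
    unfolding smooth_def
  proof (intro ballI allI impI)
    fix C L assume C: "C \<in> N" and L: "leaf Qm L \<and> neighbors L C"
    have LQ: "L \<in> Qm" and lf: "children L \<inter> Qm = {}" using L unfolding leaf_def by auto
    have "(fst L, snd L / 2) \<notin> Qm" using lf children_ne[of L] by blast
    then obtain Q where QV: "Q \<in> V" and nQ: "(fst L, snd L / 2) \<notin> Q" unfolding Qm_def by blast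
    have "L \<in> Q" using LQ QV unfolding Qm_def by blast
    hence "children L \<inter> Q = {}" using qV[OF QV] nQ children_ne[of L] unfolding quadtree_def by blast
    hence "leaf Q L" using \<open>L \<in> Q\<close> unfolding leaf_def by simp
    thus "cell_size L \<le> 2 ^ k * cell_size C" using sV[OF QV C] L unfolding smooth_def by blast
  qed
  moreover have "U \<subseteq> Qm" unfolding Qm_def using UV by blast
  ultimately show ?thesis using qm unfolding valid_def Qm_def V_def by blast
qed

lemma valid_least:
  assumes q: "quadtree R U" and N: "N \<subseteq> U"
  shows "valid R U N k (LEAST Q. quadtree R Q \<and> U \<subseteq> Q \<and> (\<forall>C\<in>N. smooth Q k C))"
proof -
  have e: "(LEAST Q. quadtree R Q \<and> U \<subseteq> Q \<and> (\<forall>C\<in>N. smooth Q k C)) = \<Inter>{Q. valid R U N k Q}"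
  proof (rule Least_equality)
    show "quadtree R (\<Inter>{Q. valid R U N k Q}) \<and> U \<subseteq> \<Inter>{Q. valid R U N k Q} \<and>
      (\<forall>C\<in>N. smooth (\<Inter>{Q. valid R U N k Q}) k C)"
      using valid_inter[OF q N, of k] unfolding valid_def by blast
  next
    fix y assume "quadtree R y \<and> U \<subseteq> y \<and> (\<forall>C\<in>N. smooth y k C)"
    hence "valid R U N k y" unfolding valid_def by blast
    thus "\<Inter>{Q. valid R U N k Q} \<le> y" by blast
  qed
  show ?thesis unfolding e using valid_inter[OF q N] .
qed



lemma stage_props:
  assumes q: "quadtree R T1"
  shows "quadtree R (fst (ext_stage R T1 n)) \<and> snd (ext_stage R T1 n) \<subseteq> fst (ext_stage R T1 n)
         \<and> fst (ext_stage R T1 n) \<subseteq> fst (ext_stage R T1 (Suc n))"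
proof (induction n)
  case 0
  have v: "valid R T1 T1 (Suc 0) (fst (ext_stage R T1 (Suc 0)))"
    using valid_least[OF q order_refl, of "Suc 0"] by (simp add: Let_def)
  thus ?case using q unfolding valid_def by simp
next
  case (Suc n)
  let ?U = "fst (ext_stage R T1 n)" and ?N = "snd (ext_stage R T1 n)"
  have v: "valid R ?U ?N (Suc n) (fst (ext_stage R T1 (Suc n)))"
    using valid_least[of R ?U ?N "Suc n"] Suc.IH by (simp add: Let_def)
  hence q1: "quadtree R (fst (ext_stage R T1 (Suc n)))" unfolding valid_def by simp
  let ?U1 = "fst (ext_stage R T1 (Suc n))" and ?N1 = "snd (ext_stage R T1 (Suc n))"
  have N1: "?N1 \<subseteq> ?U1" by (simp add: Let_def)
  have "valid R ?U1 ?N1 (Suc (Suc n)) (fst (ext_stage R T1 (Suc (Suc n))))"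
    using valid_least[OF q1 N1, of "Suc (Suc n)"] by (simp only: ext_stage.simps Let_def fst_conv snd_conv)
  thus ?case using q1 N1 unfolding valid_def by simp
qed

lemma stage_snd_Suc: "snd (ext_stage R T1 (Suc n)) = fst (ext_stage R T1 (Suc n)) - fst (ext_stage R T1 n)"
  by (simp add: Let_def)

lemma stage_mono:
  assumes q: "quadtree R T1" and "m \<le> n"
  shows "fst (ext_stage R T1 m) \<subseteq> fst (ext_stage R T1 n)"
  using assms(2)
proof (induction n)
  case 0 thus ?case by simp
next
  case (Suc n)
  show ?case
  proof (cases "m = Suc n")
    case False
    hence "m \<le> n" using Suc.prems by simp
    thus ?thesis using Suc.IH stage_props[OF q, of n] by blast
  qed simp
qed



theorem lemma25:
  fixes R :: "'n::finite cell" and T1 :: "'n cell set" and C :: "nat \<Rightarrow> 'n cell"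
    and a b :: nat
  assumes "quadtree R T1"
    and "is_chain R T1 C a b"
  shows "\<forall>j. a \<le> j \<and> j + 1 \<le> b \<longrightarrow>
           \<not> family_related (ext_quadtree R T1) (C j) (C (j + 1))"
proof (intro allI impI notI)
  fix j assume j: "a \<le> j \<and> j + 1 \<le> b"
    and fr: "family_related (ext_quadtree R T1) (C j) (C (j + 1))"
  note q = assms(1)
  have R2: "snd R > 0" using q unfolding quadtree_def by simp
  have hb1: "has_brand R T1 (C j) j" and hb2: "has_brand R T1 (C (Suc j)) (Suc j)"
    and nb: "neighbors (C j) (C (Suc j))" and sz: "cell_size (C (Suc j)) = 2 ^ j * cell_size (C j)"
    using assms(2) j unfolding is_chain_def by auto
  have j1: "1 \<le> j" using hb1 unfolding has_brand_def by simp
  then obtain i where i: "j = Suc i" using not0_implies_Suc by fastforce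
  define Tj where "Tj = fst (ext_stage R T1 i)"
  define Ts where "Ts = ext_quadtree R T1"
  have qj: "quadtree R Tj" unfolding Tj_def using stage_props[OF q] by blast
  have Cj: "C j \<in> Tj" using hb1 stage_props[OF q, of i] unfolding has_brand_def brand_cells_def Tj_def i
    by auto
  have bc: "brand_cells R T1 (Suc j) = fst (ext_stage R T1 (Suc i)) - fst (ext_stage R T1 i)"
    by (simp only: brand_cells_def i diff_Suc_1 stage_snd_Suc)
  have Cj1: "C (Suc j) \<notin> Tj" using hb2 unfolding has_brand_def bc Tj_def by blast
  have "Suc j \<le> CARD('n) + 1" using hb2 unfolding has_brand_def by simp
  hence "i \<le> CARD('n)" using i by simp
  hence TjTs: "Tj \<subseteq> Ts" unfolding Tj_def Ts_def ext_quadtree_def Tup_def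
    using stage_mono[OF q] by simp
  have qs: "quadtree R Ts" unfolding Ts_def ext_quadtree_def Tup_def using stage_props[OF q] by blast
  have pos: "snd (C j) > 0" using neighbors_pos[OF nb] by simp
  have "(2::real) ^ j \<ge> 2" using j1 by (metis power_increasing power_one_right one_le_numeral)
  hence big: "snd (C (Suc j)) \<ge> 2 * snd (C j)" using sz pos unfolding cell_size_def
    by (simp add: mult_right_mono)
  hence "cell_size (C j) \<le> cell_size (C (Suc j))" using pos unfolding cell_size_def by simp
  hence "fam_rel_ord Ts (C j) (C (Suc j))" using fr unfolding family_related_def Ts_def by simp
  then obtain P where P: "P \<in> Ts" "C (Suc j) \<in> children P" "ancestor Ts P (C j)"
    unfolding fam_rel_ord_def by blast
  let ?r = "{(X, Y). X \<in> Ts \<and> Y \<in> children X}"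
  have claim: "X \<in> Tj \<and> snd X > 0" if "(X, C j) \<in> ?r\<^sup>*" for X
    using that
  proof (induction rule: converse_rtrancl_induct)
    case base thus ?case using Cj pos by simp
  next
    case (step y z)
    have y: "y \<in> Ts" "z \<in> children y" using step(1) by auto
    have z: "z \<in> Tj" "snd z > 0" using step(3) by auto
    have sy: "snd y > 0" using children_snd[OF y(2)] z(2) by simp
    then obtain ky where ky: "y \<in> lev R ky" using qt_lev[OF qs y(1)] by blast
    have "snd y \<le> snd R" using lev_pos[OF R2 ky] by simp
    hence "z \<noteq> R" using children_snd[OF y(2)] sy by auto
    then obtain P' where P': "P' \<in> Tj" "z \<in> children P'" using qj z(1) unfolding quadtree_def by blast
    have "snd P' > 0" using children_snd[OF P'(2)] z(2) by simp
    then obtain k' where "P' \<in> lev R k'" using qt_lev[OF qj P'(1)] by blast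
    hence "y = P'" using parent_unique[OF R2 ky _ y(2) P'(2)] by blast
    thus ?case using P' sy by simp
  qed
  have anc: "(P, C j) \<in> ?r\<^sup>*" using P(3) unfolding ancestor_def .
  have "P \<noteq> C j" using children_snd[OF P(2)] big pos by auto
  from anc this obtain Z where Z: "(P, Z) \<in> ?r" "(Z, C j) \<in> ?r\<^sup>*"
    by (cases rule: converse_rtranclE) blast+
  have "Z \<in> Tj" using claim[OF Z(2)] by simp
  moreover have "P \<in> Tj" using claim[OF anc] by simp
  moreover have "Z \<in> children P" using Z(1) by simp
  ultimately have "children P \<subseteq> Tj" using qj unfolding quadtree_def by blast
  thus False using P(2) Cj1 by blast
qed


end
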